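(* Let $N\ge1$, $0\le R_+\le N$, and let $u(\vec k),v(\vec k)$ be complex $R_+\times N$ matrices (defined for all $\vec k$ in the Brillouin zone) satisfying $$u(\vec k)u^\dagger(\vec k)-v(\vec k)v^\dagger(\vec k)=\mathbb{1}_{R_+},\qquad u(\vec k)v^T(-\vec k)-v(\vec k)u^T(-\vec k)=0.$$ Consider the bosonic Hamiltonian $H=\sum_{\vec k}\sum_{m=1}^{R_+}A^\dagger_{m,\vec k}A_{m,\vec k}$ with $A_{m,\vec k}=\sum_{n=1}^N(u_{mn}(\vec k)b_{n,\vec k}+v_{mn}(\vec k)b^\dagger_{n,-\vec k})$, and write it (up to an additive constant) as $H=\frac12\sum_{\vec k}\phi_{\vec k}^\dagger h(\vec k)\phi_{\vec k}$ with Hermitian BdG matrix $h(\vec k)$. Let $Q(\vec k)=u^\dagger(\vec k)u(\vec k)$ and let $\tilde h(\vec k)=\mathrm{diag}\big(Q(\vec k),\,Q(-\vec k)^T\big)$ be the BdG matrix of the number-conserving Hamiltonian $\tilde H=\sum_{\vec k}\sum_{m,n}Q_{mn}(\vec k)b^\dagger_{m,\vec k}b_{n,\vec k}$. Then for every $\vec k$, $$\tilde h=\tfrac14\big(h+\tau_z h\tau_z+\tau_z h\tau_z h+h\tau_z h\tau_z\big),$$ where $h=h(\vec k)$ and $\tilde h=\tilde h(\vec k)$.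
   Context: $b_{n,\vec k}$ ($n=1,\dots,N$) are bosonic annihilation operators on sublattice $n$ at momentum $\vec k$ of a lattice with $N$ sites per unit cell and periodic boundary conditions. The Nambu vector is $\phi_{\vec k}=(b_{1,\vec k},\dots,b_{N,\vec k},b^\dagger_{1,-\vec k},\dots,b^\dagger_{N,-\vec k})^T$ and $\tau_z=\mathrm{diag}(\mathbb{1}_N,-\mathbb{1}_N)$. This is the positive-definite (band-flattened) case, in which all modes above the gap are particle-like. *)

theory Defs
  imports Complex_Main "Jordan_Normal_Form.Matrix"
begin

definition adj :: "complex mat \<Rightarrow> complex mat" where
  "adj A = transpose_mat (map_mat cnj A)"

definition tau_z :: "nat \<Rightarrow> complex mat" where
  "tau_z N = four_block_mat (1\<^sub>m N) (0\<^sub>m N N) (0\<^sub>m N N) (- 1\<^sub>m N)"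

text \<open>sigma_x swaps particle and hole blocks: phi_{-k} = sigma_x (phi_k^dagger)^T.\<close>
definition sigma_x :: "nat \<Rightarrow> complex mat" where
  "sigma_x N = four_block_mat (0\<^sub>m N N) (1\<^sub>m N) (1\<^sub>m N) (0\<^sub>m N N)"

text \<open>The R x 2N coefficient matrix W(k) = [u(k) v(k)], so that
  (A_{1,k},...,A_{R,k})^T = W(k) phi_k.\<close>
definition nambu_coeff :: "nat \<Rightarrow> ('k \<Rightarrow> complex mat) \<Rightarrow> ('k \<Rightarrow> complex mat) \<Rightarrow> 'k \<Rightarrow> complex mat" where
  "nambu_coeff N u v k = four_block_mat (u k) (v k) (0\<^sub>m 0 N) (0\<^sub>m 0 N)"

text \<open>With M(k) = W(k)^dagger W(k) one has H = sum_k phi_k^dagger M(k) phi_k, and, using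
  phi_k = sigma_x (phi_{-k}^dagger)^T and the bosonic commutation relations, up to an
  additive constant H = 1/2 sum_k phi_k^dagger h(k) phi_k with the (Hermitian,
  particle-hole symmetric) BdG matrix h(k) = M(k) + sigma_x M(-k)^T sigma_x.\<close>
definition bdg_h :: "nat \<Rightarrow> ('k::uminus \<Rightarrow> complex mat) \<Rightarrow> ('k \<Rightarrow> complex mat) \<Rightarrow> 'k \<Rightarrow> complex mat" where
  "bdg_h N u v k =
     (let M = (\<lambda>q. adj (nambu_coeff N u v q) * nambu_coeff N u v q)
      in M k + sigma_x N * transpose_mat (M (- k)) * sigma_x N)"

definition bdg_tilde :: "nat \<Rightarrow> ('k::uminus \<Rightarrow> complex mat) \<Rightarrow> 'k \<Rightarrow> complex mat" where
  "bdg_tilde N u k =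
     (let Q = (\<lambda>q. adj (u q) * u q)
      in four_block_mat (Q k) (0\<^sub>m N N) (0\<^sub>m N N) (transpose_mat (Q (- k))))"

end

theory Submission
  imports Defs
begin

lemma adj_carrier[simp]: "A \<in> carrier_mat r c \<Longrightarrow> adj A \<in> carrier_mat c r"
  by (simp add: adj_def)

lemma adj_dims[simp]: "dim_row (adj A) = dim_col A" "dim_col (adj A) = dim_row A"
  by (simp_all add: adj_def)

lemma adj_index[simp]: "i < dim_col A \<Longrightarrow> j < dim_row A \<Longrightarrow> adj A $$ (i,j) = cnj (A $$ (j,i))"
  by (simp add: adj_def)

lemma adj_adj[simp]: "adj (adj A) = A"
  by (rule eq_matI) auto

lemma cnj_mult: assumes "A \<in> carrier_mat nr n" "B \<in> carrier_mat n nc"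
  shows "map_mat cnj (A * B) = map_mat cnj A * map_mat cnj B"
  using assms by (intro eq_matI) (auto simp: scalar_prod_def)

lemma adj_mult: assumes "A \<in> carrier_mat nr n" "B \<in> carrier_mat n nc"
  shows "adj (A * B) = adj B * adj A"
  unfolding adj_def using assms
  by (simp add: cnj_mult transpose_mult[of _ nr n])

lemma four_block_empty: assumes "A \<in> carrier_mat r c" "B \<in> carrier_mat r 0" "C \<in> carrier_mat 0 c" "D \<in> carrier_mat 0 0"
  shows "four_block_mat A B C D = A"
  using assms by (intro eq_matI) auto

lemma tau_carrier[simp]: "tau_z N \<in> carrier_mat (N+N) (N+N)"
  by (simp add: tau_z_def)
lemma sigma_carrier[simp]: "sigma_x N \<in> carrier_mat (N+N) (N+N)"
  by (simp add: sigma_x_def)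

lemma adj_tau[simp]: "adj (tau_z N) = tau_z N"
  by (rule eq_matI) (auto simp: tau_z_def)
lemma cnj_tau[simp]: "map_mat cnj (tau_z N) = tau_z N"
  by (rule eq_matI) (auto simp: tau_z_def)
lemma adj_sigma[simp]: "adj (sigma_x N) = sigma_x N"
  by (rule eq_matI) (auto simp: sigma_x_def)

lemma adj_transpose: "adj (transpose_mat A) = map_mat cnj A"
  by (rule eq_matI) auto
lemma transpose_adj: "transpose_mat (adj A) = map_mat cnj A"
  by (rule eq_matI) auto

lemma sigma_conj: assumes "a \<in> carrier_mat N N" "b \<in> carrier_mat N N" "c \<in> carrier_mat N N" "d \<in> carrier_mat N N"
  shows "sigma_x N * four_block_mat a b c d * sigma_x N = four_block_mat d c b a"
  using assms unfolding sigma_x_def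
  by (simp add: mult_four_block_mat[where ?nr1.0=N and ?n1.0=N and ?n2.0=N and ?nr2.0=N and ?nc1.0=N and ?nc2.0=N])

lemma tau_left: assumes "a \<in> carrier_mat N N" "b \<in> carrier_mat N N" "c \<in> carrier_mat N N" "d \<in> carrier_mat N N"
  shows "tau_z N * four_block_mat a b c d = four_block_mat a b (- c) (- d)"
  using assms unfolding tau_z_def
  by (simp add: mult_four_block_mat[where ?nr1.0=N and ?n1.0=N and ?n2.0=N and ?nr2.0=N and ?nc1.0=N and ?nc2.0=N])

lemma tau_right: assumes "a \<in> carrier_mat N N" "b \<in> carrier_mat N N" "c \<in> carrier_mat N N" "d \<in> carrier_mat N N"
  shows "four_block_mat a b c d * tau_z N = four_block_mat a (- b) c (- d)"
  using assms unfolding tau_z_def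
  by (simp add: mult_four_block_mat[where ?nr1.0=N and ?n1.0=N and ?n2.0=N and ?nr2.0=N and ?nc1.0=N and ?nc2.0=N])

lemma sts: "sigma_x N * tau_z N * sigma_x N = - tau_z N"
  unfolding tau_z_def
  by (subst sigma_conj) (auto intro!: eq_matI)

lemma assoc4: assumes a: "A \<in> carrier_mat n1 n2" and b: "B \<in> carrier_mat n2 n3"
  and c: "C \<in> carrier_mat n3 n4" and d: "D \<in> carrier_mat n4 n5"
  shows "A * B * C * D = A * (B * (C * D))"
proof -
  have "A * B * C * D = (A * B) * (C * D)" by (rule assoc_mult_mat[OF mult_carrier_mat[OF a b] c d])
  also have "\<dots> = A * (B * (C * D))" by (rule assoc_mult_mat[OF a b mult_carrier_mat[OF c d]])
  finally show ?thesis .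
qed

lemma hth:
  fixes X X' Y Y' T :: "complex mat"
  assumes c: "X \<in> carrier_mat n r" "X' \<in> carrier_mat r n" "Y \<in> carrier_mat n r" "Y' \<in> carrier_mat r n" "T \<in> carrier_mat n n"
    and h1: "X' * T * X = 1\<^sub>m r" and h2: "Y' * T * Y = - 1\<^sub>m r"
    and h3: "X' * T * Y = 0\<^sub>m r r" and h4: "Y' * T * X = 0\<^sub>m r r"
  shows "(X * X' + Y * Y') * T * (X * X' + Y * Y') = X * X' - Y * Y'"
proof -
  have e1: "X' * (T * (X * Z)) = Z" if "Z \<in> carrier_mat r m" for Z m
  proof -
    have "X' * (T * (X * Z)) = (X' * T * X) * Z" using c that by (intro assoc4[symmetric])
    then show ?thesis using h1 that by simp
  qed
  have e2: "Y' * (T * (Y * Z)) = - Z" if "Z \<in> carrier_mat r m" for Z m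
  proof -
    have "Y' * (T * (Y * Z)) = (Y' * T * Y) * Z" using c that by (intro assoc4[symmetric])
    then show ?thesis using h2 that by simp
  qed
  have e3: "X' * (T * (Y * Z)) = 0\<^sub>m r m" if "Z \<in> carrier_mat r m" for Z m
  proof -
    have "X' * (T * (Y * Z)) = (X' * T * Y) * Z" using c that by (intro assoc4[symmetric])
    then show ?thesis using h3 that by simp
  qed
  have e4: "Y' * (T * (X * Z)) = 0\<^sub>m r m" if "Z \<in> carrier_mat r m" for Z m
  proof -
    have "Y' * (T * (X * Z)) = (Y' * T * X) * Z" using c that by (intro assoc4[symmetric])
    then show ?thesis using h4 that by simp
  qed
  have P: "X * X' \<in> carrier_mat n n" "Y * Y' \<in> carrier_mat n n" using c by auto
  have "(X * X' + Y * Y') * T * (X * X' + Y * Y') = (X * X' + Y * Y') * (T * (X * X' + Y * Y'))"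
    using c P by (simp del: assoc_mult_mat add: assoc_mult_mat[of _ n n _ n _ n, symmetric])
  also have "\<dots> = (X * X' + Y * Y') * (T * (X * X') + T * (Y * Y'))"
    using mult_add_distrib_mat[OF c(5) P(1) P(2)] by simp
  also have "\<dots> = X * X' * (T * (X * X') + T * (Y * Y')) + Y * Y' * (T * (X * X') + T * (Y * Y'))"
    using c P by (intro add_mult_distrib_mat[of _ n n]) auto
  also have "X * X' * (T * (X * X') + T * (Y * Y')) = X * X'"
  proof -
    have TP: "T * (X * X') \<in> carrier_mat n n" "T * (Y * Y') \<in> carrier_mat n n" using c P by auto
    have "X * X' * (T * (X * X') + T * (Y * Y')) = X * (X' * (T * (X * X') + T * (Y * Y')))"
      using c TP by (intro assoc_mult_mat) auto
    also have "\<dots> = X * (X' * (T * (X * X')) + X' * (T * (Y * Y')))"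
      using mult_add_distrib_mat[OF c(2) TP] by simp
    also have "\<dots> = X * (X' + 0\<^sub>m r n)" using c by (simp add: e1 e3)
    also have "\<dots> = X * X'" using c by simp
    finally show ?thesis .
  qed
  also have "Y * Y' * (T * (X * X') + T * (Y * Y')) = - (Y * Y')"
  proof -
    have TP: "T * (X * X') \<in> carrier_mat n n" "T * (Y * Y') \<in> carrier_mat n n" using c P by auto
    have "Y * Y' * (T * (X * X') + T * (Y * Y')) = Y * (Y' * (T * (X * X') + T * (Y * Y')))"
      using c TP by (intro assoc_mult_mat) auto
    also have "\<dots> = Y * (Y' * (T * (X * X')) + Y' * (T * (Y * Y')))"
      using mult_add_distrib_mat[OF c(4) TP] by simp
    also have "\<dots> = Y * (0\<^sub>m r n + - Y')" using c by (simp add: e2 e4)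
    also have "\<dots> = - (Y * Y')" using c by simp
    finally show ?thesis .
  qed
  finally show ?thesis using P by (simp add: minus_add_uminus_mat[of _ n n])
qed

lemma final_blocks:
  fixes p11 p12 p21 p22 q11 q12 q21 q22 :: "complex mat"
  assumes c: "p11 \<in> carrier_mat N N" "p12 \<in> carrier_mat N N" "p21 \<in> carrier_mat N N" "p22 \<in> carrier_mat N N"
     "q11 \<in> carrier_mat N N" "q12 \<in> carrier_mat N N" "q21 \<in> carrier_mat N N" "q22 \<in> carrier_mat N N"
   and P: "P = four_block_mat p11 p12 p21 p22" and Q: "Q = four_block_mat q11 q12 q21 q22"
   and h: "h = P + Q"
   and hth: "h * tau_z N * h = P - Q"
  shows "(1/4 :: complex) \<cdot>\<^sub>m (h + tau_z N * h * tau_z N + tau_z N * h * tau_z N * h + h * tau_z N * h * tau_z N)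
     = four_block_mat p11 (0\<^sub>m N N) (0\<^sub>m N N) q22"
proof -
  have hb: "h = four_block_mat (p11+q11) (p12+q12) (p21+q21) (p22+q22)"
    unfolding h P Q using c by (intro eq_matI) auto
  have db: "P - Q = four_block_mat (p11-q11) (p12-q12) (p21-q21) (p22-q22)"
    unfolding P Q using c by (intro eq_matI) auto
  have hc: "h \<in> carrier_mat (N+N) (N+N)" using hb c by simp
  have T: "tau_z N \<in> carrier_mat (N+N) (N+N)" by simp
  have e1: "tau_z N * h * tau_z N * h = tau_z N * (P - Q)"
  proof -
    have "tau_z N * h * tau_z N * h = tau_z N * (h * tau_z N * h)"
      using assoc4[OF T hc T hc] assoc_mult_mat[OF hc T hc] by simp
    then show ?thesis using hth by simp
  qed
  have e2: "h * tau_z N * h * tau_z N = (P - Q) * tau_z N"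
    using hth by simp
  have e3: "tau_z N * h * tau_z N = four_block_mat (p11+q11) (-(p12+q12)) (-(p21+q21)) (p22+q22)"
    unfolding hb using c by (simp add: tau_left tau_right)
  have dc: "p11-q11 \<in> carrier_mat N N" "p12-q12 \<in> carrier_mat N N" "p21-q21 \<in> carrier_mat N N" "p22-q22 \<in> carrier_mat N N"
    using c by auto
  show ?thesis unfolding e1 e2 unfolding e3 db tau_left[OF dc] tau_right[OF dc] using c
    apply (subst hb)
    apply (rule eq_matI)
    apply auto
    done
qed

lemma adj_four_block:
  assumes "A \<in> carrier_mat nr1 nc1" "B \<in> carrier_mat nr1 nc2" "C \<in> carrier_mat nr2 nc1" "D \<in> carrier_mat nr2 nc2"
  shows "adj (four_block_mat A B C D) = four_block_mat (adj A) (adj C) (adj B) (adj D)"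
  using assms by (intro eq_matI) auto

lemma W_carrier: assumes "u \<in> carrier_mat R N" "v \<in> carrier_mat R N"
  shows "four_block_mat u v (0\<^sub>m 0 N) (0\<^sub>m 0 N) \<in> carrier_mat R (N+N)"
  using four_block_carrier_mat[OF assms(1) zero_carrier_mat[of 0 N], of v "0\<^sub>m 0 N"] by simp

lemma M_blocks: assumes u: "u \<in> carrier_mat R N" and v: "v \<in> carrier_mat R N"
  shows "adj (four_block_mat u v (0\<^sub>m 0 N) (0\<^sub>m 0 N)) * four_block_mat u v (0\<^sub>m 0 N) (0\<^sub>m 0 N)
     = four_block_mat (adj u * u) (adj u * v) (adj v * u) (adj v * v)"
proof -
  have "adj (four_block_mat u v (0\<^sub>m 0 N) (0\<^sub>m 0 N)) = four_block_mat (adj u) (0\<^sub>m N 0) (adj v) (0\<^sub>m N 0)"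
    using assms by (subst adj_four_block[where ?nr2.0=0]) (auto intro!: eq_matI)
  moreover have "four_block_mat (adj u) (0\<^sub>m N 0) (adj v) (0\<^sub>m N 0) * four_block_mat u v (0\<^sub>m 0 N) (0\<^sub>m 0 N)
     = four_block_mat (adj u * u + 0\<^sub>m N 0 * 0\<^sub>m 0 N) (adj u * v + 0\<^sub>m N 0 * 0\<^sub>m 0 N)
         (adj v * u + 0\<^sub>m N 0 * 0\<^sub>m 0 N) (adj v * v + 0\<^sub>m N 0 * 0\<^sub>m 0 N)"
    using assms by (intro mult_four_block_mat) auto
  moreover have "adj u * u \<in> carrier_mat N N" "adj u * v \<in> carrier_mat N N" "adj v * u \<in> carrier_mat N N" "adj v * v \<in> carrier_mat N N"
    using assms by auto
  ultimately show ?thesis by simp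
qed

lemma WT_blocks: assumes u: "u \<in> carrier_mat R N" and v: "v \<in> carrier_mat R N"
  shows "four_block_mat u v (0\<^sub>m 0 N) (0\<^sub>m 0 N) * tau_z N = four_block_mat u (- v) (0\<^sub>m 0 N) (0\<^sub>m 0 N)"
  unfolding tau_z_def using assms
  by (subst mult_four_block_mat[where ?n1.0=N and ?n2.0=N and ?nc1.0=N and ?nc2.0=N]) (auto intro!: eq_matI)

lemma WTS_blocks: assumes u: "u \<in> carrier_mat R N" and v: "v \<in> carrier_mat R N"
  shows "four_block_mat u (- v) (0\<^sub>m 0 N) (0\<^sub>m 0 N) * sigma_x N = four_block_mat (- v) u (0\<^sub>m 0 N) (0\<^sub>m 0 N)"
  unfolding sigma_x_def using assms
  by (subst mult_four_block_mat[where ?n1.0=N and ?n2.0=N and ?nc1.0=N and ?nc2.0=N]) (auto intro!: eq_matI)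

lemma c1_blocks: assumes u: "u \<in> carrier_mat R N" and v: "v \<in> carrier_mat R N"
  and h: "u * adj u - v * adj v = 1\<^sub>m R"
  shows "four_block_mat u v (0\<^sub>m 0 N) (0\<^sub>m 0 N) * tau_z N * adj (four_block_mat u v (0\<^sub>m 0 N) (0\<^sub>m 0 N)) = 1\<^sub>m R"
proof -
  have a: "adj (four_block_mat u v (0\<^sub>m 0 N) (0\<^sub>m 0 N)) = four_block_mat (adj u) (0\<^sub>m N 0) (adj v) (0\<^sub>m N 0)"
    using assms by (subst adj_four_block[where ?nr2.0=0]) (auto intro!: eq_matI)
  have "four_block_mat u (- v) (0\<^sub>m 0 N) (0\<^sub>m 0 N) * four_block_mat (adj u) (0\<^sub>m N 0) (adj v) (0\<^sub>m N 0)
    = four_block_mat (u * adj u + (- v) * adj v) (u * 0\<^sub>m N 0 + (- v) * 0\<^sub>m N 0)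
        (0\<^sub>m 0 N * adj u + 0\<^sub>m 0 N * adj v) (0\<^sub>m 0 N * 0\<^sub>m N 0 + 0\<^sub>m 0 N * 0\<^sub>m N 0)"
    using assms by (intro mult_four_block_mat) auto
  also have "\<dots> = u * adj u + (- v) * adj v"
    using assms by (intro four_block_empty[where r=R and c=R]) auto
  also have "\<dots> = u * adj u - v * adj v"
    using assms by (simp add: minus_add_uminus_mat[of _ R R])
  finally show ?thesis unfolding WT_blocks[OF assms(1,2)] a h .
qed

lemma cnj_adj: "map_mat cnj (adj A) = transpose_mat A"
  by (intro eq_matI) auto

lemma c3_blocks: fixes u v u' v' :: "complex mat" assumes u: "u \<in> carrier_mat R N" and v: "v \<in> carrier_mat R N"
  and u': "u' \<in> carrier_mat R N" and v': "v' \<in> carrier_mat R N"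
  and h: "u * transpose_mat v' - v * transpose_mat u' = 0\<^sub>m R R"
  shows "four_block_mat (- v) u (0\<^sub>m 0 N) (0\<^sub>m 0 N) * transpose_mat (four_block_mat u' v' (0\<^sub>m 0 N) (0\<^sub>m 0 N)) = 0\<^sub>m R R"
proof -
  have a: "transpose_mat (four_block_mat u' v' (0\<^sub>m 0 N) (0\<^sub>m 0 N)) = four_block_mat (transpose_mat u') (0\<^sub>m N 0) (transpose_mat v') (0\<^sub>m N 0)"
    using assms by (subst transpose_four_block_mat[where ?nr2.0=0]) (auto intro!: eq_matI)
  have "four_block_mat (- v) u (0\<^sub>m 0 N) (0\<^sub>m 0 N) * four_block_mat (transpose_mat u') (0\<^sub>m N 0) (transpose_mat v') (0\<^sub>m N 0)
    = four_block_mat ((- v) * transpose_mat u' + u * transpose_mat v') ((- v) * 0\<^sub>m N 0 + u * 0\<^sub>m N 0)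
        (0\<^sub>m 0 N * transpose_mat u' + 0\<^sub>m 0 N * transpose_mat v') (0\<^sub>m 0 N * 0\<^sub>m N 0 + 0\<^sub>m 0 N * 0\<^sub>m N 0)"
    using assms by (intro mult_four_block_mat) auto
  also have "\<dots> = (- v) * transpose_mat u' + u * transpose_mat v'"
    using assms by (intro four_block_empty[where r=R and c=R]) auto
  also have "\<dots> = u * transpose_mat v' - v * transpose_mat u'"
  proof -
    have c: "v * transpose_mat u' \<in> carrier_mat R R" "u * transpose_mat v' \<in> carrier_mat R R" using u v u' v' by auto
    have "(- v) * transpose_mat u' + u * transpose_mat v' = - (v * transpose_mat u') + u * transpose_mat v'" using uminus_mult_left_mat[of v "transpose_mat u'"] u v u' v' by simp
    also have "\<dots> = u * transpose_mat v' + - (v * transpose_mat u')" using c by (intro comm_add_mat) auto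
    also have "\<dots> = u * transpose_mat v' - v * transpose_mat u'" using c by (simp add: minus_add_uminus_mat[of _ R R])
    finally show ?thesis .
  qed
  finally show ?thesis unfolding a h .
qed

theorem mainTheorem3:
  fixes N R :: nat
    and u v :: "'k::ab_group_add \<Rightarrow> complex mat"
    and k :: "'k"
  assumes "N \<ge> 1" and "R \<le> N"
    and "\<And>q. u q \<in> carrier_mat R N"
    and "\<And>q. v q \<in> carrier_mat R N"
    and "\<And>q. u q * adj (u q) - v q * adj (v q) = 1\<^sub>m R"
    and "\<And>q. u q * transpose_mat (v (- q)) - v q * transpose_mat (u (- q)) = 0\<^sub>m R R"
  shows "bdg_tilde N u k =
           (1/4 :: complex) \<cdot>\<^sub>m
             (bdg_h N u v k
              + tau_z N * bdg_h N u v k * tau_z N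
              + tau_z N * bdg_h N u v k * tau_z N * bdg_h N u v k
              + bdg_h N u v k * tau_z N * bdg_h N u v k * tau_z N)"
proof -
  note uc = assms(3) and vc = assms(4)
  define W where "W q = nambu_coeff N u v q" for q
  have Wd: "W q = four_block_mat (u q) (v q) (0\<^sub>m 0 N) (0\<^sub>m 0 N)" for q
    unfolding W_def nambu_coeff_def ..
  have Wc: "W q \<in> carrier_mat R (N+N)" for q
    unfolding Wd by (rule W_carrier[OF uc vc])
  define T where "T = tau_z N"
  define S where "S = sigma_x N"
  have Tc: "T \<in> carrier_mat (N+N) (N+N)" and Sc: "S \<in> carrier_mat (N+N) (N+N)"
    unfolding T_def S_def by simp_all
  define X where "X = adj (W k)"
  define X' where "X' = W k"
  define Y where "Y = S * transpose_mat (W (- k))"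
  define Y' where "Y' = adj Y"
  have Xc: "X \<in> carrier_mat (N+N) R" and X'c: "X' \<in> carrier_mat R (N+N)"
    and Yc: "Y \<in> carrier_mat (N+N) R" and Y'c: "Y' \<in> carrier_mat R (N+N)"
    unfolding X_def X'_def Y_def Y'_def using Wc Sc by auto
  have Y'd: "Y' = map_mat cnj (W (- k)) * S"
    unfolding Y'_def Y_def using Wc Sc
    by (simp add: adj_mult[of _ "N+N" "N+N" _ R] adj_transpose S_def)
  have c1: "W q * T * adj (W q) = 1\<^sub>m R" for q
    unfolding Wd T_def by (rule c1_blocks[OF uc vc assms(5)])
  have h1: "X' * T * X = 1\<^sub>m R" unfolding X'_def X_def by (rule c1)
  have h2: "Y' * T * Y = - 1\<^sub>m R"
  proof -
    have "Y' * T * Y = map_mat cnj (W (- k)) * (S * T * S) * transpose_mat (W (- k))"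
    proof -
      have cW: "map_mat cnj (W (- k)) \<in> carrier_mat R (N+N)" using Wc by simp
      have tW: "transpose_mat (W (- k)) \<in> carrier_mat (N+N) R" using Wc by simp
      have STS: "S * T * S \<in> carrier_mat (N+N) (N+N)" using Sc Tc by simp
      have a1: "map_mat cnj (W (- k)) * S * T * (S * transpose_mat (W (- k)))
          = map_mat cnj (W (- k)) * (S * (T * (S * transpose_mat (W (- k)))))"
        by (rule assoc4[OF cW Sc Tc mult_carrier_mat[OF Sc tW]])
      have a2: "map_mat cnj (W (- k)) * (S * T * S) * transpose_mat (W (- k))
          = map_mat cnj (W (- k)) * ((S * T * S) * transpose_mat (W (- k)))"
        by (rule assoc_mult_mat[OF cW STS tW])
      have a3: "(S * T * S) * transpose_mat (W (- k)) = S * (T * (S * transpose_mat (W (- k))))"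
        by (rule assoc4[OF Sc Tc Sc tW])
      show ?thesis unfolding Y'd Y_def a1 a2 a3 ..
    qed
    also have "S * T * S = - T" unfolding S_def T_def by (rule sts)
    also have "map_mat cnj (W (- k)) * (- T) * transpose_mat (W (- k)) = - map_mat cnj (W (- k) * T * adj (W (- k)))"
    proof -
      have "map_mat cnj (W (- k) * T * adj (W (- k))) = map_mat cnj (W (- k) * T) * map_mat cnj (adj (W (- k)))"
        by (rule cnj_mult[OF mult_carrier_mat[OF Wc Tc] adj_carrier[OF Wc]])
      also have "\<dots> = map_mat cnj (W (- k)) * T * transpose_mat (W (- k))"
        using Wc Tc by (simp add: cnj_mult[of _ R "N+N" _ "N+N"] T_def cnj_adj)
      moreover have "map_mat cnj (W (- k)) * - T = - (map_mat cnj (W (- k)) * T)"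
        using Wc[of "-k"] Tc uminus_mult_right_mat[of "map_mat cnj (W (- k))" T] by simp
      moreover have "- (map_mat cnj (W (- k)) * T) * transpose_mat (W (- k)) = - (map_mat cnj (W (- k)) * T * transpose_mat (W (- k)))"
        using Wc[of "-k"] Tc uminus_mult_left_mat[of "map_mat cnj (W (- k)) * T" "transpose_mat (W (- k))"] by simp
      ultimately show ?thesis by simp
    qed
    also have "\<dots> = - 1\<^sub>m R" unfolding c1 by (intro eq_matI) auto
    finally show ?thesis .
  qed
  have h3: "X' * T * Y = 0\<^sub>m R R"
  proof -
    have "X' * T * Y = W k * T * S * transpose_mat (W (- k))"
      unfolding X'_def Y_def
      by (rule assoc_mult_mat[OF mult_carrier_mat[OF Wc Tc] Sc transpose_carrier_mat[THEN iffD2, OF Wc], symmetric])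
    also have "\<dots> = 0\<^sub>m R R"
      unfolding Wd T_def S_def WT_blocks[OF uc vc] WTS_blocks[OF uc vc]
      by (rule c3_blocks[OF uc vc uc vc assms(6)])
    finally show ?thesis .
  qed
  have h4: "Y' * T * X = 0\<^sub>m R R"
  proof -
    have "adj (X' * T * Y) = adj Y * adj (X' * T)"
      by (rule adj_mult[OF mult_carrier_mat[OF X'c Tc] Yc])
    also have "adj (X' * T) = adj T * adj X'" by (rule adj_mult[OF X'c Tc])
    also have "adj T * adj X' = T * X" unfolding T_def X_def X'_def by simp
    also have "adj Y * (T * X) = Y' * T * X" unfolding Y'_def
      by (rule assoc_mult_mat[OF adj_carrier[OF Yc] Tc Xc, symmetric])
    finally have "adj (X' * T * Y) = Y' * T * X" .
    moreover have "adj (0\<^sub>m R R) = 0\<^sub>m R R" by (intro eq_matI) auto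
    ultimately show ?thesis unfolding h3 by simp
  qed
  have hth': "(X * X' + Y * Y') * T * (X * X' + Y * Y') = X * X' - Y * Y'"
    by (rule hth[OF Xc X'c Yc Y'c Tc h1 h2 h3 h4])
  have mc: "adj (u q) * u q \<in> carrier_mat N N" "adj (u q) * v q \<in> carrier_mat N N"
     "adj (v q) * u q \<in> carrier_mat N N" "adj (v q) * v q \<in> carrier_mat N N" for q
    using mult_carrier_mat[OF adj_carrier[OF uc] uc] mult_carrier_mat[OF adj_carrier[OF uc] vc]
      mult_carrier_mat[OF adj_carrier[OF vc] uc] mult_carrier_mat[OF adj_carrier[OF vc] vc] by auto
  have P: "X * X' = four_block_mat (adj (u k) * u k) (adj (u k) * v k) (adj (v k) * u k) (adj (v k) * v k)"
    unfolding X_def X'_def Wd by (rule M_blocks[OF uc vc])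
  have yy: "S * transpose_mat (adj (W (- k)) * W (- k)) * S = Y * Y'"
  proof -
    have cW: "map_mat cnj (W (- k)) \<in> carrier_mat R (N+N)" using Wc by simp
    have tW: "transpose_mat (W (- k)) \<in> carrier_mat (N+N) R" using Wc by simp
    have "transpose_mat (adj (W (- k)) * W (- k)) = transpose_mat (W (- k)) * transpose_mat (adj (W (- k)))"
      by (rule transpose_mult[OF adj_carrier[OF Wc] Wc])
    also have "\<dots> = transpose_mat (W (- k)) * map_mat cnj (W (- k))" by (simp add: transpose_adj)
    finally have t: "transpose_mat (adj (W (- k)) * W (- k)) = transpose_mat (W (- k)) * map_mat cnj (W (- k))" .
    have "S * (transpose_mat (W (- k)) * map_mat cnj (W (- k))) * S = S * transpose_mat (W (- k)) * map_mat cnj (W (- k)) * S"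
      by (simp only: assoc_mult_mat[OF Sc tW cW])
    also have "\<dots> = S * transpose_mat (W (- k)) * (map_mat cnj (W (- k)) * S)"
      by (rule assoc_mult_mat[OF mult_carrier_mat[OF Sc tW] cW Sc])
    finally show ?thesis unfolding t Y_def Y'd .
  qed
  have hd: "bdg_h N u v k = X * X' + Y * Y'"
  proof -
    have "bdg_h N u v k = X * X' + S * transpose_mat (adj (W (- k)) * W (- k)) * S"
      unfolding bdg_h_def Let_def X_def X'_def W_def S_def nambu_coeff_def ..
    then show ?thesis using yy by simp
  qed
  have Q: "Y * Y' = four_block_mat (transpose_mat (adj (v (-k)) * v (-k))) (transpose_mat (adj (u (-k)) * v (-k)))
       (transpose_mat (adj (v (-k)) * u (-k))) (transpose_mat (adj (u (-k)) * u (-k)))"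
  proof -
    have "Y * Y' = S * transpose_mat (adj (W (- k)) * W (- k)) * S"
      using yy by simp
    also have "\<dots> = S * four_block_mat (transpose_mat (adj (u (-k)) * u (-k))) (transpose_mat (adj (v (-k)) * u (-k)))
       (transpose_mat (adj (u (-k)) * v (-k))) (transpose_mat (adj (v (-k)) * v (-k))) * S"
      unfolding Wd M_blocks[OF uc vc] using mc
      by (subst transpose_four_block_mat[where ?nr1.0=N and ?nc1.0=N and ?nr2.0=N and ?nc2.0=N]) auto
    also have "\<dots> = four_block_mat (transpose_mat (adj (v (-k)) * v (-k))) (transpose_mat (adj (u (-k)) * v (-k)))
       (transpose_mat (adj (v (-k)) * u (-k))) (transpose_mat (adj (u (-k)) * u (-k)))"
      unfolding S_def using mc by (intro sigma_conj) auto
    finally show ?thesis .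
  qed
  have "(1/4 :: complex) \<cdot>\<^sub>m
             (bdg_h N u v k
              + tau_z N * bdg_h N u v k * tau_z N
              + tau_z N * bdg_h N u v k * tau_z N * bdg_h N u v k
              + bdg_h N u v k * tau_z N * bdg_h N u v k * tau_z N)
     = four_block_mat (adj (u k) * u k) (0\<^sub>m N N) (0\<^sub>m N N) (transpose_mat (adj (u (-k)) * u (-k)))"
    apply (rule final_blocks[OF _ _ _ _ _ _ _ _ P Q hd])
    using mc hth' hd unfolding T_def by auto
  then show ?thesis unfolding bdg_tilde_def Let_def by simp
qed

end
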